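(* Let $Q_6(I,S)$ and $Q_6(J,T)$ be finite. A map $\varphi:Q_6(I,S)\to Q_6(J,T)$ is a surjective $pm$-morphism if and only if: (1) $\varphi(S)=T$ and $\varphi(\zeta(x))=\zeta(\varphi(x))$ for all $x\in S$; (2) $\varphi^{-1}(J)\subseteq I$; (3) $\varphi(x)\ne\varphi(y)$ for distinct $x,y\in\varphi^{-1}(J)$; (4) for every $x\in I\setminus\varphi^{-1}(J)$ there exists $u\in S\setminus\varphi^{-1}(J)$ with $u\ne x$ and $\varphi(u)=\varphi(x)$.
   Context: For a finite set $S$ with $|S|\ge3$ and $I\subseteq S$, $Q_6(I,S)$ is the finite poset with involution on $S\cup\zeta(S)$, where $\zeta(S)$ is a disjoint copy of $S$, $\zeta$ interchanges each $s\in S$ with its copy $\zeta(s)$, the topology is discrete, and the only strict comparabilities are: for $x,y\in S$, $x<\zeta(y)$ iff ($x\ne y$ or $x\notin I$). For $pm$-spaces $P,Q$, a $pm$-morphism $\varphi:P\to Q$ is a continuous order-preserving map with $\varphi\circ\zeta=\zeta\circ\varphi$ and $\mathrm{Min}(\varphi(x))\subseteq\varphi(\mathrm{Min}(x))$ for all $x\in P$, where $\mathrm{Min}(z)$ denotes the set of minimal elements of the space lying below $z$. *)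

theory Defs
  imports "HOL-Analysis.Analysis"
begin

text \<open>Elements of Q6(I,S): Inl s stands for s in S, Inr s stands for its copy zeta(s).\<close>

definition Q6_carrier :: "'a set \<Rightarrow> ('a + 'a) set" where
  "Q6_carrier S = Inl ` S \<union> Inr ` S"

definition zeta :: "'a + 'a \<Rightarrow> 'a + 'a" where
  "zeta = case_sum Inr Inl"

definition Q6_le :: "'a set \<Rightarrow> 'a set \<Rightarrow> 'a + 'a \<Rightarrow> 'a + 'a \<Rightarrow> bool" where
  "Q6_le I S p q \<longleftrightarrow> p = q \<or>
     (\<exists>x y. x \<in> S \<and> y \<in> S \<and> p = Inl x \<and> q = Inr y \<and> (x \<noteq> y \<or> x \<notin> I))"

definition Min_below :: "'x set \<Rightarrow> ('x \<Rightarrow> 'x \<Rightarrow> bool) \<Rightarrow> 'x \<Rightarrow> 'x set" where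
  "Min_below X le z = {m \<in> X. le m z \<and> (\<forall>y\<in>X. le y m \<longrightarrow> y = m)}"

definition pm_morphism ::
  "'x set \<Rightarrow> ('x \<Rightarrow> 'x \<Rightarrow> bool) \<Rightarrow> ('x \<Rightarrow> 'x) \<Rightarrow>
   'y set \<Rightarrow> ('y \<Rightarrow> 'y \<Rightarrow> bool) \<Rightarrow> ('y \<Rightarrow> 'y) \<Rightarrow> ('x \<Rightarrow> 'y) \<Rightarrow> bool" where
  "pm_morphism X leX zX Y leY zY \<phi> \<longleftrightarrow>
     \<phi> \<in> X \<rightarrow> Y \<and>
     continuous_map (discrete_topology X) (discrete_topology Y) \<phi> \<and>
     (\<forall>x\<in>X. \<forall>y\<in>X. leX x y \<longrightarrow> leY (\<phi> x) (\<phi> y)) \<and>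
     (\<forall>x\<in>X. \<phi> (zX x) = zY (\<phi> x)) \<and>
     (\<forall>x\<in>X. Min_below Y leY (\<phi> x) \<subseteq> \<phi> ` Min_below X leX x)"

definition Q6_pm_morphism ::
  "'a set \<Rightarrow> 'a set \<Rightarrow> 'b set \<Rightarrow> 'b set \<Rightarrow> ('a + 'a \<Rightarrow> 'b + 'b) \<Rightarrow> bool" where
  "Q6_pm_morphism I S J T \<phi> \<longleftrightarrow>
     pm_morphism (Q6_carrier S) (Q6_le I S) zeta (Q6_carrier T) (Q6_le J T) zeta \<phi>"

end

theory Submission
  imports Defs
begin

lemma zeta_simps[simp]: "zeta (Inl x) = Inr x" "zeta (Inr x) = Inl x"
  by (simp_all add: zeta_def)

lemma carrier_iff: "p \<in> Q6_carrier S \<longleftrightarrow> (\<exists>x\<in>S. p = Inl x) \<or> (\<exists>x\<in>S. p = Inr x)"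
  by (auto simp: Q6_carrier_def)

lemma inl_carrier[simp]: "Inl x \<in> Q6_carrier S \<longleftrightarrow> x \<in> S"
  and inr_carrier[simp]: "Inr x \<in> Q6_carrier S \<longleftrightarrow> x \<in> S"
  by (auto simp: Q6_carrier_def)

lemma le_simps[simp]:
  "Q6_le I S (Inl x) (Inl y) \<longleftrightarrow> x = y"
  "Q6_le I S (Inr x) q \<longleftrightarrow> q = Inr x"
  "Q6_le I S (Inl x) (Inr y) \<longleftrightarrow> x \<in> S \<and> y \<in> S \<and> (x \<noteq> y \<or> x \<notin> I)"
  by (auto simp: Q6_le_def)

lemma other_elem:
  assumes "finite S" "card S \<ge> 3" shows "\<exists>x\<in>S. x \<noteq> y"
proof (rule ccontr)
  assume "\<not> ?thesis" then have "S \<subseteq> {y}" by auto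
  then have "card S \<le> card {y}" by (intro card_mono) auto
  then have "card S \<le> 1" by simp
  with assms show False by simp
qed

lemma min_inl:
  assumes "x \<in> S" shows "Min_below (Q6_carrier S) (Q6_le I S) (Inl x) = {Inl x}"
proof -
  have le: "Q6_le I S m (Inl x) \<longleftrightarrow> m = Inl x" for m :: "'a + 'a"
    by (cases m) simp_all
  show ?thesis unfolding Min_below_def using assms by (auto simp: le)
qed

lemma min_inr:
  assumes "finite S" "card S \<ge> 3" "y \<in> S"
  shows "Min_below (Q6_carrier S) (Q6_le I S) (Inr y) = Inl ` {x\<in>S. x \<noteq> y \<or> x \<notin> I}"
    (is "?A = ?B")
proof
  show "?A \<subseteq> ?B"
  proof
    fix m :: "'a + 'a" assume m: "m \<in> Min_below (Q6_carrier S) (Q6_le I S) (Inr y)"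
    obtain z where z: "z \<in> S" "z \<noteq> y" using other_elem[OF assms(1,2)] by blast
    show "m \<in> ?B"
    proof (cases m)
      case (Inl a) then show ?thesis using m by (auto simp: Min_below_def)
    next
      case (Inr a)
      then have "a = y" using m by (auto simp: Min_below_def)
      have "\<forall>q\<in>Q6_carrier S. Q6_le I S q m \<longrightarrow> q = m" using m by (simp add: Min_below_def)
      then have "Q6_le I S (Inl z) m \<longrightarrow> Inl z = m" using z by simp
      then show ?thesis using Inr \<open>a = y\<close> z assms(3) by simp
    qed
  qed
next
  show "?B \<subseteq> ?A"
  proof
    fix m assume "m \<in> ?B"
    then obtain x where x: "x \<in> S" "x \<noteq> y \<or> x \<notin> I" "m = Inl x" by auto
    have "Q6_le I S q (Inl x) \<longleftrightarrow> q = Inl x" for q by (cases q) auto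
    then show "m \<in> ?A"
      using x assms(3) by (auto simp: Min_below_def)
  qed
qed

theorem lemma5p2:
  fixes I S :: "'a set" and J T :: "'b set" and \<phi> :: "'a + 'a \<Rightarrow> 'b + 'b"
  assumes "finite S" "card S \<ge> 3" "I \<subseteq> S"
      and "finite T" "card T \<ge> 3" "J \<subseteq> T"
  shows "(Q6_pm_morphism I S J T \<phi> \<and> \<phi> ` Q6_carrier S = Q6_carrier T) \<longleftrightarrow>
    ((\<phi> ` (Inl ` S) = Inl ` T \<and> (\<forall>x\<in>S. \<phi> (zeta (Inl x)) = zeta (\<phi> (Inl x)))) \<and>
     {p \<in> Q6_carrier S. \<phi> p \<in> Inl ` J} \<subseteq> Inl ` I \<and>
     inj_on \<phi> {p \<in> Q6_carrier S. \<phi> p \<in> Inl ` J} \<and>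
     (\<forall>x \<in> Inl ` I - {p \<in> Q6_carrier S. \<phi> p \<in> Inl ` J}.
        \<exists>u \<in> Inl ` S - {p \<in> Q6_carrier S. \<phi> p \<in> Inl ` J}. u \<noteq> x \<and> \<phi> u = \<phi> x))"
    (is "?L \<longleftrightarrow> ?R")
proof
  assume L: ?L
  have fnc: "\<phi> \<in> Q6_carrier S \<rightarrow> Q6_carrier T"
    and mono: "\<forall>x\<in>Q6_carrier S. \<forall>y\<in>Q6_carrier S. Q6_le I S x y \<longrightarrow> Q6_le J T (\<phi> x) (\<phi> y)"
    and zc: "\<forall>x\<in>Q6_carrier S. \<phi> (zeta x) = zeta (\<phi> x)"
    and mn: "\<forall>x\<in>Q6_carrier S. Min_below (Q6_carrier T) (Q6_le J T) (\<phi> x)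
               \<subseteq> \<phi> ` Min_below (Q6_carrier S) (Q6_le I S) x"
    and sur: "\<phi> ` Q6_carrier S = Q6_carrier T"
    using L by (auto simp: Q6_pm_morphism_def pm_morphism_def)
  define f where "f x = projl (\<phi> (Inl x))" for x
  have fl: "\<phi> (Inl x) = Inl (f x) \<and> f x \<in> T" if x: "x \<in> S" for x
  proof -
    have "\<phi> (Inl x) \<in> Q6_carrier T" using fnc x by auto
    moreover have "\<phi> (Inl x) \<noteq> Inr t" if t: "t \<in> T" for t
    proof
      assume e: "\<phi> (Inl x) = Inr t"
      obtain s where s: "s \<in> T" "s \<noteq> t" using other_elem[OF assms(4,5)] by blast
      have "Inl s \<in> Min_below (Q6_carrier T) (Q6_le J T) (Inr t)"
        using min_inr[OF assms(4,5) t] s by auto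
      moreover have "Min_below (Q6_carrier T) (Q6_le J T) (\<phi> (Inl x)) \<subseteq> \<phi> ` Min_below (Q6_carrier S) (Q6_le I S) (Inl x)"
        using mn x by simp
      ultimately have "Inl s \<in> \<phi> ` {Inl x}" using e min_inl[OF x, of I] by auto
      then show False using e by simp
    qed
    ultimately show ?thesis unfolding carrier_iff f_def by auto
  qed
  have fr: "\<phi> (Inr x) = Inr (f x)" if x: "x \<in> S" for x
    using zc[rule_format, of "Inl x"] x fl[OF x] by simp
  have img: "\<phi> ` (Inl ` S) = Inl ` T"
  proof
    show "\<phi> ` Inl ` S \<subseteq> Inl ` T" using fl by auto
  next
    show "Inl ` T \<subseteq> \<phi> ` Inl ` S"
    proof
      fix q :: "'b + 'b" assume "q \<in> Inl ` T"
      then obtain t where t: "t \<in> T" "q = Inl t" by auto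
      then have "q \<in> \<phi> ` Q6_carrier S" using sur by simp
      then obtain p where p: "p \<in> Q6_carrier S" "q = \<phi> p" by auto
      then show "q \<in> \<phi> ` Inl ` S" using fr fl t unfolding carrier_iff by auto
    qed
  qed
  have P: "{p \<in> Q6_carrier S. \<phi> p \<in> Inl ` J} = Inl ` {x\<in>S. f x \<in> J}"
    using fl fr by (auto simp: carrier_iff)
  have c2: "{p \<in> Q6_carrier S. \<phi> p \<in> Inl ` J} \<subseteq> Inl ` I"
  proof -
    have "x \<in> I" if "x \<in> S" "f x \<in> J" for x
    proof (rule ccontr)
      assume "x \<notin> I"
      then have "Q6_le J T (\<phi> (Inl x)) (\<phi> (Inr x))" using mono that by auto
      then show False using fl fr that by simp
    qed
    then show ?thesis unfolding P by auto
  qed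
  have c3: "inj_on \<phi> {p \<in> Q6_carrier S. \<phi> p \<in> Inl ` J}"
  proof -
    have "x = y" if "x \<in> S" "f x \<in> J" "y \<in> S" "f x = f y" for x y
    proof (rule ccontr)
      assume "x \<noteq> y"
      then have "Q6_le J T (\<phi> (Inl x)) (\<phi> (Inr y))" using mono that by auto
      then show False using fl fr that by simp
    qed
    then show ?thesis unfolding P inj_on_def using fl by force
  qed
  have c4: "\<forall>x \<in> Inl ` I - {p \<in> Q6_carrier S. \<phi> p \<in> Inl ` J}.
        \<exists>u \<in> Inl ` S - {p \<in> Q6_carrier S. \<phi> p \<in> Inl ` J}. u \<noteq> x \<and> \<phi> u = \<phi> x"
  proof
    fix p assume "p \<in> Inl ` I - {p \<in> Q6_carrier S. \<phi> p \<in> Inl ` J}"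
    then obtain x where x: "x \<in> I" "p = Inl x" "f x \<notin> J" unfolding P using assms(3) by blast
    have xS: "x \<in> S" using x assms(3) by auto
    have "Inl (f x) \<in> Min_below (Q6_carrier T) (Q6_le J T) (\<phi> (Inr x))"
      using fr[OF xS] min_inr[OF assms(4,5), of "f x" J] fl[OF xS] x by auto
    then have "Inl (f x) \<in> \<phi> ` Inl ` {y\<in>S. y \<noteq> x \<or> y \<notin> I}"
      using mn xS min_inr[OF assms(1,2) xS, of I] by force
    then obtain u where u: "u \<in> S" "u \<noteq> x" "\<phi> (Inl u) = Inl (f x)" using x by auto
    have "f u = f x" using u fl by auto
    then show "\<exists>u \<in> Inl ` S - {p \<in> Q6_carrier S. \<phi> p \<in> Inl ` J}. u \<noteq> p \<and> \<phi> u = \<phi> p"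
      using u x xS fl unfolding P by (intro bexI[of _ "Inl u"]) auto
  qed
  show ?R using img fl fr c2 c3 c4 by simp
next
  assume R: ?R
  have img: "\<phi> ` (Inl ` S) = Inl ` T"
    and zc0: "\<forall>x\<in>S. \<phi> (zeta (Inl x)) = zeta (\<phi> (Inl x))"
    and c2: "{p \<in> Q6_carrier S. \<phi> p \<in> Inl ` J} \<subseteq> Inl ` I"
    and c3: "inj_on \<phi> {p \<in> Q6_carrier S. \<phi> p \<in> Inl ` J}"
    and c4: "\<forall>x \<in> Inl ` I - {p \<in> Q6_carrier S. \<phi> p \<in> Inl ` J}.
        \<exists>u \<in> Inl ` S - {p \<in> Q6_carrier S. \<phi> p \<in> Inl ` J}. u \<noteq> x \<and> \<phi> u = \<phi> x"
    using R by auto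
  define f where "f x = projl (\<phi> (Inl x))" for x
  have fl: "\<phi> (Inl x) = Inl (f x) \<and> f x \<in> T" if x: "x \<in> S" for x
  proof -
    have "\<phi> (Inl x) \<in> Inl ` T" using img x by blast
    then obtain t where "t \<in> T" "\<phi> (Inl x) = Inl t" by blast
    then show ?thesis by (simp add: f_def)
  qed
  have fr: "\<phi> (Inr x) = Inr (f x)" if x: "x \<in> S" for x
    using zc0 x fl[OF x] by simp
  have fS: "f ` S = T"
  proof (intro equalityI subsetI)
    fix t assume "t \<in> f ` S" then show "t \<in> T" using fl by auto
  next
    fix t assume "t \<in> T" then have "Inl t \<in> \<phi> ` Inl ` S" using img by simp
    then obtain x where "x \<in> S" "Inl t = \<phi> (Inl x)" by auto
    then show "t \<in> f ` S" using fl by auto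
  qed
  have P: "{p \<in> Q6_carrier S. \<phi> p \<in> Inl ` J} = Inl ` {x\<in>S. f x \<in> J}"
    using fl fr by (auto simp: carrier_iff)
  have d2: "x \<in> I" if "x \<in> S" "f x \<in> J" for x
    using c2 that unfolding P by auto
  have d3: "x = y" if "x \<in> S" "f x \<in> J" "y \<in> S" "f x = f y" for x y
  proof -
    have "Inl x \<in> {p \<in> Q6_carrier S. \<phi> p \<in> Inl ` J}" "Inl y \<in> {p \<in> Q6_carrier S. \<phi> p \<in> Inl ` J}"
      using that fl by auto
    moreover have "\<phi> (Inl x) = \<phi> (Inl y)" using that fl by simp
    ultimately have "Inl x = Inl y" using inj_onD[OF c3] by blast
    then show ?thesis by simp
  qed
  have fnc: "\<phi> \<in> Q6_carrier S \<rightarrow> Q6_carrier T"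
    using fl fr by (auto simp: carrier_iff)
  have mono: "\<forall>x\<in>Q6_carrier S. \<forall>y\<in>Q6_carrier S. Q6_le I S x y \<longrightarrow> Q6_le J T (\<phi> x) (\<phi> y)"
  proof (intro ballI impI)
    fix p q assume pq: "p \<in> Q6_carrier S" "q \<in> Q6_carrier S" "Q6_le I S p q"
    show "Q6_le J T (\<phi> p) (\<phi> q)"
    proof (cases "p = q")
      case True then show ?thesis by (simp add: Q6_le_def)
    next
      case False
      then obtain x y where xy: "x \<in> S" "y \<in> S" "p = Inl x" "q = Inr y" "x \<noteq> y \<or> x \<notin> I"
        using pq(3) unfolding Q6_le_def by auto
      have "f x \<noteq> f y \<or> f x \<notin> J"
      proof (rule ccontr)
        assume "\<not> (f x \<noteq> f y \<or> f x \<notin> J)"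
        then have "f x = f y" "f x \<in> J" by auto
        then have "x = y" "x \<in> I" using d3[of x y] d2[of x] xy by auto
        then show False using xy by auto
      qed
      then show ?thesis using xy fl fr by simp
    qed
  qed
  have zc: "\<forall>x\<in>Q6_carrier S. \<phi> (zeta x) = zeta (\<phi> x)"
    using fl fr by (auto simp: carrier_iff)
  have mn: "\<forall>x\<in>Q6_carrier S. Min_below (Q6_carrier T) (Q6_le J T) (\<phi> x)
               \<subseteq> \<phi> ` Min_below (Q6_carrier S) (Q6_le I S) x"
  proof
    fix p assume "p \<in> Q6_carrier S"
    then consider x where "x \<in> S" "p = Inl x" | y where "y \<in> S" "p = Inr y"
      unfolding carrier_iff by auto
    then show "Min_below (Q6_carrier T) (Q6_le J T) (\<phi> p)
               \<subseteq> \<phi> ` Min_below (Q6_carrier S) (Q6_le I S) p"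
    proof cases
      case 1 then show ?thesis using fl[OF 1(1)] min_inl[OF 1(1), of I] min_inl[of "f x" T J] by simp
    next
      case 2
      note y = 2
      show ?thesis
      proof
        fix q assume "q \<in> Min_below (Q6_carrier T) (Q6_le J T) (\<phi> p)"
        then obtain t where t: "t \<in> T" "t \<noteq> f y \<or> f y \<notin> J" "q = Inl t"
          using min_inr[OF assms(4,5), of "f y" J] y fr fl by auto
        obtain x where x: "x \<in> S" "t = f x" using t fS by auto
        have "\<exists>u\<in>S. (u \<noteq> y \<or> u \<notin> I) \<and> f u = t"
        proof (cases "t \<noteq> f y")
          case True then show ?thesis using x by metis
        next
          case False
          then have ft: "f y \<notin> J" "t = f y" using t by auto
          show ?thesis
          proof (cases "y \<in> I")
            case False then show ?thesis using ft y by auto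
          next
            case True
            then have "Inl y \<in> Inl ` I - {p \<in> Q6_carrier S. \<phi> p \<in> Inl ` J}"
              using ft unfolding P by auto
            then obtain u where "u \<in> Inl ` S - {p \<in> Q6_carrier S. \<phi> p \<in> Inl ` J}"
              "u \<noteq> Inl y" "\<phi> u = \<phi> (Inl y)" using c4 by blast
            then show ?thesis using ft fl y by auto
          qed
        qed
        then obtain u where u: "u \<in> S" "u \<noteq> y \<or> u \<notin> I" "f u = t" by blast
        have "Inl u \<in> Min_below (Q6_carrier S) (Q6_le I S) p"
          using min_inr[OF assms(1,2) y(1), of I] y u by auto
        moreover have "q = \<phi> (Inl u)" using u t fl by simp
        ultimately show "q \<in> \<phi> ` Min_below (Q6_carrier S) (Q6_le I S) p" by blast
      qed
    qed
  qed
  have sur: "\<phi> ` Q6_carrier S = Q6_carrier T"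
  proof
    show "\<phi> ` Q6_carrier S \<subseteq> Q6_carrier T" using fnc by auto
  next
    show "Q6_carrier T \<subseteq> \<phi> ` Q6_carrier S"
    proof
      fix q assume "q \<in> Q6_carrier T"
      then consider t where "t \<in> T" "q = Inl t" | t where "t \<in> T" "q = Inr t"
        unfolding carrier_iff by auto
      then show "q \<in> \<phi> ` Q6_carrier S"
      proof cases
        case 1 then obtain x where "x \<in> S" "t = f x" using fS by auto
        then show ?thesis using 1 fl by (metis image_eqI inl_carrier)
      next
        case 2 then obtain x where "x \<in> S" "t = f x" using fS by auto
        then show ?thesis using 2 fr by (metis image_eqI inr_carrier)
      qed
    qed
  qed
  show ?L using fnc mono zc mn sur
    by (simp add: Q6_pm_morphism_def pm_morphism_def)
qed

end
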